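(* Let $(R,\mathfrak{m})$ be a finite commutative local ring with identity such that $\mathfrak{m}$ is not a principal ideal, and let $I$ be a proper ideal of $R$ (so $I\subseteq\mathfrak m$). If $\Gamma''_I(R)$ is planar, then $\operatorname{ara}(\mathfrak{m}/I)\leq 4$.
   Context: For an ideal $K$ of a finite commutative ring, $\operatorname{ara}(K)$ denotes the smallest of the cardinalities of minimal generating sets of $K$; here $\mathfrak m/I$ is regarded as an ideal of $R/I$. For an ideal $I$ of $R$, $\Gamma''_I(R)$ is the simple undirected graph whose vertex set is $\{x\in R\setminus I : xR+I\neq R\}$, with distinct vertices $x,y$ adjacent if and only if $x\notin yR+I$ and $y\notin xR+I$. A graph is planar if it can be drawn in the plane with edges meeting only at their endpoints. *)

theory Defs
  imports "HOL-Algebra.Algebra" "HOL-Analysis.Analysis"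
begin

definition local_ring_with_max :: "('a, 'b) ring_scheme \<Rightarrow> 'a set \<Rightarrow> bool" where
  "local_ring_with_max R m \<longleftrightarrow> cring R \<and> maximalideal m R \<and>
     (\<forall>J. maximalideal J R \<longrightarrow> J = m)"

definition gamma2_vertices :: "('a, 'b) ring_scheme \<Rightarrow> 'a set \<Rightarrow> 'a set" where
  "gamma2_vertices R I =
     {x \<in> carrier R. x \<notin> I \<and> (PIdl\<^bsub>R\<^esub> x) <+>\<^bsub>R\<^esub> I \<noteq> carrier R}"

definition gamma2_adj :: "('a, 'b) ring_scheme \<Rightarrow> 'a set \<Rightarrow> 'a \<Rightarrow> 'a \<Rightarrow> bool" where
  "gamma2_adj R I x y \<longleftrightarrow>
     x \<in> gamma2_vertices R I \<and> y \<in> gamma2_vertices R I \<and> x \<noteq> y \<and>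
     x \<notin> (PIdl\<^bsub>R\<^esub> y) <+>\<^bsub>R\<^esub> I \<and> y \<notin> (PIdl\<^bsub>R\<^esub> x) <+>\<^bsub>R\<^esub> I"

definition planar_graph :: "'v set \<Rightarrow> ('v \<Rightarrow> 'v \<Rightarrow> bool) \<Rightarrow> bool" where
  "planar_graph V E \<longleftrightarrow>
    (\<exists>(pos :: 'v \<Rightarrow> complex) (c :: 'v \<Rightarrow> 'v \<Rightarrow> real \<Rightarrow> complex).
       inj_on pos V \<and>
       (\<forall>x\<in>V. \<forall>y\<in>V. E x y \<longrightarrow>
           arc (c x y) \<and> pathstart (c x y) = pos x \<and> pathfinish (c x y) = pos y \<and>
           path_image (c x y) \<inter> pos ` V = {pos x, pos y}) \<and>
       (\<forall>x\<in>V. \<forall>y\<in>V. \<forall>u\<in>V. \<forall>v\<in>V. E x y \<longrightarrow> E u v \<longrightarrow> {x, y} \<noteq> {u, v} \<longrightarrow>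
           path_image (c x y) \<inter> path_image (c u v) \<subseteq> pos ` ({x, y} \<inter> {u, v})))"

definition quot_ideal :: "('a, 'b) ring_scheme \<Rightarrow> 'a set \<Rightarrow> 'a set \<Rightarrow> 'a set set" where
  "quot_ideal R m I = (\<lambda>x. I +>\<^bsub>R\<^esub> x) ` m"

definition minimal_gen_set :: "('c, 'd) ring_scheme \<Rightarrow> 'c set \<Rightarrow> 'c set \<Rightarrow> bool" where
  "minimal_gen_set A K S \<longleftrightarrow> S \<subseteq> carrier A \<and> Idl\<^bsub>A\<^esub> S = K \<and>
     (\<forall>T. T \<subset> S \<longrightarrow> Idl\<^bsub>A\<^esub> T \<noteq> K)"

definition ara :: "('c, 'd) ring_scheme \<Rightarrow> 'c set \<Rightarrow> nat" where
  "ara A K = Min {card S | S. minimal_gen_set A K S}"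

end

theory Submission
  imports Defs
begin

lemma inside_reach:
  assumes "connected C" "C \<inter> S = {}" "x \<in> C" "y \<in> C" "x \<in> inside S"
  shows "y \<in> inside S"
proof -
  have "connected_component (- S) x y"
    unfolding connected_component_def using assms by blast
  then have "connected_component_set (- S) y = connected_component_set (- S) x"
    by (metis connected_component_eq mem_Collect_eq)
  then show ?thesis using assms unfolding inside_def by auto
qed

lemma arc_open_connected:
  assumes "arc g"
  shows "connected (path_image g - {pathstart g, pathfinish g})"
    and "connected (path_image g - {pathstart g})"
    and "connected (path_image g - {pathfinish g})"
proof -
  have inj: "inj_on g {0..1}" and cg: "continuous_on {0..1} g"
    using assms by (auto simp: arc_def path_def)
  have e1: "path_image g - {pathstart g, pathfinish g} = g ` {0<..<1}"
  proof
    show "path_image g - {pathstart g, pathfinish g} \<subseteq> g ` {0<..<1}"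
      unfolding path_image_def pathstart_def pathfinish_def
      by (force simp: less_le)
    show "g ` {0<..<1} \<subseteq> path_image g - {pathstart g, pathfinish g}"
      unfolding path_image_def pathstart_def pathfinish_def
      using inj by (force simp: inj_on_def)
  qed
  have e2: "path_image g - {pathstart g} = g ` {0<..1}"
  proof
    show "path_image g - {pathstart g} \<subseteq> g ` {0<..1}"
      unfolding path_image_def pathstart_def pathfinish_def
      by (force simp: less_le)
    show "g ` {0<..1} \<subseteq> path_image g - {pathstart g}"
      unfolding path_image_def pathstart_def pathfinish_def
      using inj by (force simp: inj_on_def)
  qed
  have e3: "path_image g - {pathfinish g} = g ` {0..<1}"
  proof
    show "path_image g - {pathfinish g} \<subseteq> g ` {0..<1}"
      unfolding path_image_def pathstart_def pathfinish_def
      by (force simp: less_le)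
    show "g ` {0..<1} \<subseteq> path_image g - {pathfinish g}"
      unfolding path_image_def pathstart_def pathfinish_def
      using inj by (force simp: inj_on_def)
  qed
  show "connected (path_image g - {pathstart g, pathfinish g})"
    unfolding e1 by (rule connected_continuous_image[OF continuous_on_subset[OF cg]]) auto
  show "connected (path_image g - {pathstart g})"
    unfolding e2 by (rule connected_continuous_image[OF continuous_on_subset[OF cg]]) auto
  show "connected (path_image g - {pathfinish g})"
    unfolding e3 by (rule connected_continuous_image[OF continuous_on_subset[OF cg]]) auto
qed

lemma arc_open_nonempty:
  assumes "arc g"
  shows "path_image g - {pathstart g, pathfinish g} \<noteq> {}"
proof -
  have inj: "inj_on g {0..1}" using assms by (auto simp: arc_def)
  have "g (1/2) \<in> path_image g" unfolding path_image_def by auto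
  moreover have h: "(1/2::real) \<in> {0..1}" "(0::real) \<in> {0..1}" "(1::real)\<in>{0..1}" by auto
  have "g (1/2) \<noteq> g 0" using inj_on_eq_iff[OF inj h(1) h(2)] by simp
  moreover have "g (1/2) \<noteq> g 1" using inj_on_eq_iff[OF inj h(1) h(3)] by simp
  ultimately show ?thesis unfolding pathstart_def pathfinish_def by blast
qed

lemma outside_reach:
  assumes "connected_component (- S) x y" "y \<in> outside S"
  shows "x \<in> outside S"
proof -
  have "connected_component_set (- S) y = connected_component_set (- S) x"
    using assms(1) by (metis connected_component_eq mem_Collect_eq)
  moreover have "x \<in> - S" using assms(1) connected_component_in by blast
  ultimately show ?thesis using assms(2) unfolding outside_def by auto
qed

lemma jordan_two_arcs:
  fixes c1 c2 :: "real \<Rightarrow> complex"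
  assumes "arc c1" "arc c2" "pathstart c1 = a" "pathfinish c1 = b"
    "pathstart c2 = a" "pathfinish c2 = b" "path_image c1 \<inter> path_image c2 = {a,b}"
  shows "inside (path_image c1 \<union> path_image c2) \<noteq> {}"
    "connected (inside (path_image c1 \<union> path_image c2))"
    "frontier (inside (path_image c1 \<union> path_image c2)) = path_image c1 \<union> path_image c2"
proof -
  have sp: "simple_path (c1 +++ reversepath c2)"
    using assms by (auto simp: simple_path_join_loop_eq arc_reversepath)
  have lp: "pathfinish (c1 +++ reversepath c2) = pathstart (c1 +++ reversepath c2)"
    using assms by simp
  have pi: "path_image (c1 +++ reversepath c2) = path_image c1 \<union> path_image c2"
    using assms by (simp add: path_image_join path_image_reversepath)
  show "inside (path_image c1 \<union> path_image c2) \<noteq> {}"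
    "connected (inside (path_image c1 \<union> path_image c2))"
    "frontier (inside (path_image c1 \<union> path_image c2)) = path_image c1 \<union> path_image c2"
    using Jordan_inside_outside[OF sp lp] unfolding pi by auto
qed

lemma theta_key:
  fixes c1 c2 c3 :: "real \<Rightarrow> complex"
  assumes arcs: "arc c1" "arc c2" "arc c3"
    and ends: "pathstart c1 = a" "pathfinish c1 = b" "pathstart c2 = a" "pathfinish c2 = b"
      "pathstart c3 = a" "pathfinish c3 = b"
    and i12: "path_image c1 \<inter> path_image c2 = {a,b}"
    and i13: "path_image c1 \<inter> path_image c3 = {a,b}"
    and i23: "path_image c2 \<inter> path_image c3 = {a,b}"
    and n3: "(path_image c3 - {a,b}) \<inter> inside (path_image c1 \<union> path_image c2) = {}"
    and n1: "(path_image c1 - {a,b}) \<inter> inside (path_image c2 \<union> path_image c3) = {}"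
    and x: "x \<in> inside (path_image c1 \<union> path_image c2)"
  shows "x \<in> outside (path_image c2 \<union> path_image c3)"
proof -
  let ?T1 = "path_image c1" let ?T2 = "path_image c2" let ?T3 = "path_image c3"
  have J: "inside (?T1 \<union> ?T2) \<noteq> {}" "connected (inside (?T1 \<union> ?T2))"
    "frontier (inside (?T1 \<union> ?T2)) = ?T1 \<union> ?T2"
    using jordan_two_arcs[OF arcs(1,2) ends(1-4) i12] by auto
  obtain q where q: "q \<in> ?T1 - {a,b}"
    using arc_open_nonempty[OF arcs(1)] ends by auto
  have qn: "q \<notin> ?T2 \<union> ?T3" using q i12 i13 by blast
  have qni: "q \<notin> inside (?T2 \<union> ?T3)" using q n1 by blast
  have cl: "closed (?T2 \<union> ?T3)"
    using arcs by (intro closed_Un compact_imp_closed compact_path_image arc_imp_path) auto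
  have op: "open (- (?T2 \<union> ?T3))" by (rule open_Compl[OF cl])
  have "q \<in> - (?T2 \<union> ?T3)" using qn by blast
  then obtain r where r: "r > 0" "ball q r \<subseteq> - (?T2 \<union> ?T3)"
    using op open_contains_ball by blast
  have "q \<in> frontier (inside (?T1 \<union> ?T2))" using J(3) q by auto
  then have "q \<in> closure (inside (?T1 \<union> ?T2))" by (simp add: frontier_def)
  then obtain y where y: "y \<in> inside (?T1 \<union> ?T2)" "dist y q < r"
    using closure_approachable r(1) by blast
  have yn: "y \<notin> inside (?T2 \<union> ?T3)"
  proof
    assume "y \<in> inside (?T2 \<union> ?T3)"
    moreover have "ball q r \<inter> (?T2 \<union> ?T3) = {}" using r by blast
    moreover have "y \<in> ball q r" "q \<in> ball q r" using y r by (auto simp: dist_commute)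
    ultimately have "q \<in> inside (?T2 \<union> ?T3)"
      using inside_reach[of "ball q r" "?T2 \<union> ?T3" y q] by auto
    then show False using qni by blast
  qed
  have ab: "a \<in> ?T1" "b \<in> ?T1" using ends by auto
  have disj: "inside (?T1 \<union> ?T2) \<inter> (?T2 \<union> ?T3) = {}"
  proof -
    have "inside (?T1 \<union> ?T2) \<inter> (?T1 \<union> ?T2) = {}" by simp
    moreover have "?T3 \<subseteq> (?T3 - {a,b}) \<union> ?T1" using ab by auto
    ultimately show ?thesis using n3 by blast
  qed
  have xn: "x \<notin> inside (?T2 \<union> ?T3)"
  proof
    assume "x \<in> inside (?T2 \<union> ?T3)"
    then have "y \<in> inside (?T2 \<union> ?T3)"
      by (rule inside_reach[OF J(2) disj x y(1)])
    then show False using yn by blast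
  qed
  have "x \<notin> ?T2 \<union> ?T3" using disj x by blast
  then show ?thesis using xn inside_Un_outside[of "?T2 \<union> ?T3"] by blast
qed

lemma theta_mid:
  fixes c1 c2 c3 :: "real \<Rightarrow> complex"
  assumes arcs: "arc c1" "arc c2" "arc c3"
    and ends: "pathstart c1 = a" "pathfinish c1 = b" "pathstart c2 = a" "pathfinish c2 = b"
      "pathstart c3 = a" "pathfinish c3 = b"
    and i12: "path_image c1 \<inter> path_image c2 = {a,b}"
    and i13: "path_image c1 \<inter> path_image c3 = {a,b}"
    and i23: "path_image c2 \<inter> path_image c3 = {a,b}"
  shows "(path_image c3 - {a,b}) \<inter> inside (path_image c1 \<union> path_image c2) \<noteq> {} \<or>
         (path_image c1 - {a,b}) \<inter> inside (path_image c2 \<union> path_image c3) \<noteq> {} \<or>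
         (path_image c2 - {a,b}) \<inter> inside (path_image c1 \<union> path_image c3) \<noteq> {}"
proof (rule ccontr)
  let ?T1 = "path_image c1" let ?T2 = "path_image c2" let ?T3 = "path_image c3"
  assume "\<not> ?thesis"
  then have n3: "(?T3 - {a,b}) \<inter> inside (?T1 \<union> ?T2) = {}"
    and n1: "(?T1 - {a,b}) \<inter> inside (?T2 \<union> ?T3) = {}"
    and n2: "(?T2 - {a,b}) \<inter> inside (?T1 \<union> ?T3) = {}" by auto
  obtain x where x: "x \<in> inside (?T1 \<union> ?T2)"
    using jordan_two_arcs[OF arcs(1,2) ends(1-4) i12] by auto
  have o23: "x \<in> outside (?T2 \<union> ?T3)"
    by (rule theta_key[OF arcs ends i12 i13 i23 n3 n1 x])
  have o13: "x \<in> outside (?T1 \<union> ?T3)"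
    by (rule theta_key[OF arcs(2,1,3) ends(3,4,1,2,5,6)])
       (use i12 i13 i23 n3 n2 x in \<open>auto simp: Un_commute Int_commute\<close>)
  let ?S = "?T1 \<union> ?T3" let ?T = "?T2 \<union> ?T3"
  have cS: "compact ?S" "compact ?T" "compact (?T1 \<union> ?T2)"
    using arcs by (auto intro!: compact_Un compact_path_image arc_imp_path)
  have bS: "bounded ?S" "bounded ?T" "bounded (?T1 \<union> ?T2)"
    by (rule compact_imp_bounded[OF cS(1)], rule compact_imp_bounded[OF cS(2)], rule compact_imp_bounded[OF cS(3)])
  have bB: "bounded (- outside ?S \<union> - outside ?T \<union> - outside (?T1 \<union> ?T2))"
    unfolding bounded_Un by (intro conjI cobounded_outside bS)
  have "- outside ?S \<union> - outside ?T \<union> - outside (?T1 \<union> ?T2) \<noteq> UNIV"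
  proof
    assume "- outside ?S \<union> - outside ?T \<union> - outside (?T1 \<union> ?T2) = UNIV"
    then show False using bB not_bounded_UNIV by metis
  qed
  then obtain y where "y \<notin> - outside ?S \<union> - outside ?T \<union> - outside (?T1 \<union> ?T2)"
    by blast
  then have y: "y \<in> outside ?S" "y \<in> outside ?T" "y \<in> outside (?T1 \<union> ?T2)" by auto
  have cc: "connected_component (- XX) x y" if "bounded XX" "x \<in> outside XX" "y \<in> outside XX" for XX
    unfolding connected_component_def
    using that connected_outside[of XX] by (intro exI[of _ "outside XX"]) (auto simp: outside_def)
  have "connected (?S \<inter> ?T)"
  proof -
    have "a \<in> ?T3" "b \<in> ?T3" using ends(5,6) pathstart_in_path_image pathfinish_in_path_image by metis+
    then have "?T1 \<inter> ?T2 \<subseteq> ?T3" using i12 by simp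
    then have "?S \<inter> ?T = ?T3" by blast
    then show ?thesis using arcs by (auto intro: connected_path_image arc_imp_path)
  qed
  then have "connected_component (- (?S \<union> ?T)) x y"
    using Janiszewski[OF cS(1) compact_imp_closed[OF cS(2)] _ cc[OF bS(1) o13 y(1)] cc[OF bS(2) o23 y(2)]]
    by blast
  then have "connected_component (- (?T1 \<union> ?T2)) x y"
    by (rule connected_component_of_subset) auto
  then have "x \<in> outside (?T1 \<union> ?T2)" using outside_reach y(3) by blast
  then show False using x inside_Int_outside by blast
qed

definition drawing :: "'v set \<Rightarrow> ('v \<Rightarrow> complex) \<Rightarrow> ('v \<Rightarrow> 'v \<Rightarrow> real \<Rightarrow> complex) \<Rightarrow> bool" where
"drawing V P g \<longleftrightarrow> inj_on P V \<and>
 (\<forall>i\<in>V. \<forall>j\<in>V. i \<noteq> j \<longrightarrow> arc (g i j) \<and> pathstart (g i j) = P i \<and> pathfinish (g i j) = P j \<and>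
     path_image (g i j) \<inter> P ` V = {P i, P j} \<and> path_image (g i j) = path_image (g j i)) \<and>
 (\<forall>i\<in>V. \<forall>j\<in>V. \<forall>k\<in>V. \<forall>l\<in>V. i \<noteq> j \<longrightarrow> k \<noteq> l \<longrightarrow> {i,j} \<noteq> {k,l} \<longrightarrow>
     path_image (g i j) \<inter> path_image (g k l) \<subseteq> P ` ({i,j} \<inter> {k,l}))"

abbreviation E where "E g i j \<equiv> path_image (g i j)"

definition tri where "tri g a b c = E g a b \<union> E g b c \<union> E g a c"

definition via where "via g a c b = g a c +++ g c b"

context
  fixes V and P :: "'v \<Rightarrow> complex" and g
  assumes dr: "drawing V P g"
begin

lemma dr_edge: "\<forall>i\<in>V. \<forall>j\<in>V. i \<noteq> j \<longrightarrow> arc (g i j) \<and> pathstart (g i j) = P i \<and> pathfinish (g i j) = P j \<and>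
     path_image (g i j) \<inter> P ` V = {P i, P j} \<and> path_image (g i j) = path_image (g j i)"
  using dr unfolding drawing_def by simp

lemma dr_arc: "i \<in> V \<Longrightarrow> j \<in> V \<Longrightarrow> i \<noteq> j \<Longrightarrow> arc (g i j)"
  and dr_start: "i \<in> V \<Longrightarrow> j \<in> V \<Longrightarrow> i \<noteq> j \<Longrightarrow> pathstart (g i j) = P i"
  and dr_finish: "i \<in> V \<Longrightarrow> j \<in> V \<Longrightarrow> i \<noteq> j \<Longrightarrow> pathfinish (g i j) = P j"
  and dr_sym: "i \<in> V \<Longrightarrow> j \<in> V \<Longrightarrow> i \<noteq> j \<Longrightarrow> E g i j = E g j i"
  using dr_edge by simp_all

lemma dr_inj: "i \<in> V \<Longrightarrow> j \<in> V \<Longrightarrow> P i = P j \<longleftrightarrow> i = j"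
proof -
  have "inj_on P V" using dr unfolding drawing_def by simp
  then show "i \<in> V \<Longrightarrow> j \<in> V \<Longrightarrow> P i = P j \<longleftrightarrow> i = j" by (simp add: inj_on_eq_iff)
qed

lemma dr_in: "i \<in> V \<Longrightarrow> j \<in> V \<Longrightarrow> i \<noteq> j \<Longrightarrow> P i \<in> E g i j \<and> P j \<in> E g i j"
  using dr_start dr_finish pathstart_in_path_image pathfinish_in_path_image by metis

lemma dr_notin: "i \<in> V \<Longrightarrow> j \<in> V \<Longrightarrow> k \<in> V \<Longrightarrow> i \<noteq> j \<Longrightarrow> k \<noteq> i \<Longrightarrow> k \<noteq> j \<Longrightarrow> P k \<notin> E g i j"
proof
  assume a: "i \<in> V" "j \<in> V" "k \<in> V" "i \<noteq> j" "k \<noteq> i" "k \<noteq> j" "P k \<in> E g i j"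
  then have "P k \<in> E g i j \<inter> P ` V" by blast
  also have "\<dots> = {P i, P j}" using dr_edge a by simp
  finally show False using a dr_inj by auto
qed

lemma dr_int: "i \<in> V \<Longrightarrow> j \<in> V \<Longrightarrow> k \<in> V \<Longrightarrow> l \<in> V \<Longrightarrow> i \<noteq> j \<Longrightarrow> k \<noteq> l \<Longrightarrow> {i,j} \<noteq> {k,l} \<Longrightarrow>
   E g i j \<inter> E g k l = P ` ({i,j} \<inter> {k,l})"
proof
  assume a: "i \<in> V" "j \<in> V" "k \<in> V" "l \<in> V" "i \<noteq> j" "k \<noteq> l" "{i,j} \<noteq> {k,l}"
  have "\<forall>i\<in>V. \<forall>j\<in>V. \<forall>k\<in>V. \<forall>l\<in>V. i \<noteq> j \<longrightarrow> k \<noteq> l \<longrightarrow> {i,j} \<noteq> {k,l} \<longrightarrow>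
     path_image (g i j) \<inter> path_image (g k l) \<subseteq> P ` ({i,j} \<inter> {k,l})"
    using dr unfolding drawing_def by simp
  then show "E g i j \<inter> E g k l \<subseteq> P ` ({i,j} \<inter> {k,l})" using a by blast
  show "P ` ({i,j} \<inter> {k,l}) \<subseteq> E g i j \<inter> E g k l" using dr_in a by auto
qed

lemma dr_via: "a \<in> V \<Longrightarrow> b \<in> V \<Longrightarrow> c \<in> V \<Longrightarrow> a \<noteq> b \<Longrightarrow> a \<noteq> c \<Longrightarrow> b \<noteq> c \<Longrightarrow>
  arc (via g a c b) \<and> pathstart (via g a c b) = P a \<and> pathfinish (via g a c b) = P b \<and>
  path_image (via g a c b) = E g a c \<union> E g c b"
proof -
  assume a: "a \<in> V" "b \<in> V" "c \<in> V" "a \<noteq> b" "a \<noteq> c" "b \<noteq> c"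
  have i: "E g a c \<inter> E g c b = P ` ({a,c} \<inter> {c,b})"
    by (rule dr_int) (use a in \<open>auto simp: doubleton_eq_iff\<close>)
  have "{a,c} \<inter> {c,b} = {c}" using a by auto
  then have s: "E g a c \<inter> E g c b \<subseteq> {pathstart (g c b)}" using i a dr_start by auto
  have f: "pathfinish (g a c) = pathstart (g c b)" using a dr_start dr_finish by auto
  have "arc (via g a c b)" unfolding via_def
    by (rule arc_join[OF dr_arc dr_arc f s]) (use a in auto)
  moreover have "pathstart (via g a c b) = P a" using a dr_start unfolding via_def by simp
  moreover have "pathfinish (via g a c b) = P b" using a dr_finish unfolding via_def by simp
  moreover have "path_image (via g a c b) = E g a c \<union> E g c b"
    unfolding via_def by (rule path_image_join[OF f])
  ultimately show ?thesis by blast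
qed

lemma dr_open_conn:
  assumes "i \<in> V" "j \<in> V" "i \<noteq> j"
  shows "connected (E g i j - {P i})" "connected (E g i j - {P j})"
    "connected (E g i j - {P i, P j})" "E g i j - {P i, P j} \<noteq> {}"
proof -
  have A: "arc (g i j)" by (rule dr_arc[OF assms])
  have s: "pathstart (g i j) = P i" by (rule dr_start[OF assms])
  have f: "pathfinish (g i j) = P j" by (rule dr_finish[OF assms])
  show "connected (E g i j - {P i})" using arc_open_connected(2)[OF A] unfolding s .
  show "connected (E g i j - {P j})" using arc_open_connected(3)[OF A] unfolding f .
  show "connected (E g i j - {P i, P j})" using arc_open_connected(1)[OF A] unfolding s f .
  show "E g i j - {P i, P j} \<noteq> {}" using arc_open_nonempty[OF A] unfolding s f .
qed


lemma tri_alt: "a \<in> V \<Longrightarrow> b \<in> V \<Longrightarrow> c \<in> V \<Longrightarrow> a \<noteq> b \<Longrightarrow> a \<noteq> c \<Longrightarrow> b \<noteq> c \<Longrightarrow>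
  tri g a b c = E g a b \<union> E g a c \<union> E g b c \<union> E g b a \<union> E g c a \<union> E g c b"
proof -
  assume a: "a \<in> V" "b \<in> V" "c \<in> V" "a \<noteq> b" "a \<noteq> c" "b \<noteq> c"
  have "E g b a = E g a b" "E g c a = E g a c" "E g c b = E g b c" using dr_sym a by auto
  then show ?thesis unfolding tri_def by blast
qed

lemma via_img: "a \<in> V \<Longrightarrow> b \<in> V \<Longrightarrow> c \<in> V \<Longrightarrow> a \<noteq> b \<Longrightarrow> a \<noteq> c \<Longrightarrow> b \<noteq> c \<Longrightarrow>
  path_image (via g a c b) = E g a c \<union> E g c b"
  using dr_via by blast

lemma out_vertex:
  assumes "x \<in> V" "y \<in> V" "z \<in> V" "w \<in> V" "u \<in> V"
    and "x \<noteq> y" "x \<noteq> z" "y \<noteq> z" "w \<noteq> x" "w \<noteq> y" "w \<noteq> z" "u \<noteq> x" "u \<noteq> y" "u \<noteq> z" "u \<noteq> w"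
    and "P w \<in> inside (tri g x y z)"
  shows "P u \<in> inside (tri g x y z)"
proof -
  have "E g w u \<inter> tri g x y z = {}"
    unfolding tri_def using assms by (simp add: Int_Un_distrib dr_int doubleton_eq_iff)
  then show ?thesis
    using inside_reach[of "E g w u" "tri g x y z" "P w" "P u"] assms dr_in[of w u]
      arc_imp_path[OF dr_arc[of w u]] connected_path_image by metis
qed

lemma mid_inside:
  assumes "a \<in> V" "b \<in> V" "c \<in> V" "d \<in> V"
    and "a \<noteq> b" "a \<noteq> c" "a \<noteq> d" "b \<noteq> c" "b \<noteq> d" "c \<noteq> d"
    and "(path_image (via g a d b) - {P a, P b}) \<inter> inside (tri g a b c) \<noteq> {}"
  shows "P d \<in> inside (tri g a b c)"
proof -
  have v: "arc (via g a d b)" "pathstart (via g a d b) = P a" "pathfinish (via g a d b) = P b"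
    "path_image (via g a d b) = E g a d \<union> E g d b"
    using dr_via[of a b d] assms by auto
  let ?C = "path_image (via g a d b) - {P a, P b}"
  have con: "connected ?C" using arc_open_connected(1)[OF v(1)] unfolding v(2,3) .
  have "path_image (via g a d b) \<inter> tri g a b c \<subseteq> {P a, P b}"
    unfolding tri_def v(4) using assms by (simp add: Int_Un_distrib Int_Un_distrib2 dr_int doubleton_eq_iff)
  then have dis: "?C \<inter> tri g a b c = {}" by blast
  have "P d \<in> E g a d" using dr_in[of a d] assms by blast
  moreover have "P d \<noteq> P a" "P d \<noteq> P b" using dr_inj assms by auto
  ultimately have "P d \<in> ?C" unfolding v(4) by blast
  moreover obtain z where "z \<in> ?C" "z \<in> inside (tri g a b c)" using assms(11) by blast
  ultimately show ?thesis using inside_reach[OF con dis] by blast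
qed


lemma tri_via: "a \<in> V \<Longrightarrow> b \<in> V \<Longrightarrow> c \<in> V \<Longrightarrow> a \<noteq> b \<Longrightarrow> a \<noteq> c \<Longrightarrow> b \<noteq> c \<Longrightarrow>
  E g a b \<union> path_image (via g a c b) = tri g a b c"
proof -
  assume a: "a \<in> V" "b \<in> V" "c \<in> V" "a \<noteq> b" "a \<noteq> c" "b \<noteq> c"
  have "E g b a = E g a b" "E g c a = E g a c" "E g c b = E g b c" using dr_sym a by auto
  then show ?thesis unfolding via_img[OF a] tri_alt[OF a] by blast
qed

lemma tri_perm: "a \<in> V \<Longrightarrow> b \<in> V \<Longrightarrow> c \<in> V \<Longrightarrow> a \<noteq> b \<Longrightarrow> a \<noteq> c \<Longrightarrow> b \<noteq> c \<Longrightarrow>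
  tri g b a c = tri g a b c \<and> tri g a c b = tri g a b c \<and> tri g b c a = tri g a b c \<and>
  tri g c a b = tri g a b c \<and> tri g c b a = tri g a b c"
proof -
  assume a: "a \<in> V" "b \<in> V" "c \<in> V" "a \<noteq> b" "a \<noteq> c" "b \<noteq> c"
  have "tri g b a c = tri g a b c" unfolding tri_alt[OF a] by (subst tri_alt) (use a in auto)
  moreover have "tri g a c b = tri g a b c" unfolding tri_alt[OF a] by (subst tri_alt) (use a in auto)
  moreover have "tri g b c a = tri g a b c" unfolding tri_alt[OF a] by (subst tri_alt) (use a in auto)
  moreover have "tri g c a b = tri g a b c" unfolding tri_alt[OF a] by (subst tri_alt) (use a in auto)
  moreover have "tri g c b a = tri g a b c" unfolding tri_alt[OF a] by (subst tri_alt) (use a in auto)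
  ultimately show ?thesis by blast
qed


lemma K4_inside:
  assumes V: "a \<in> V" "b \<in> V" "c \<in> V" "d \<in> V"
    and nd: "a \<noteq> b" "a \<noteq> c" "a \<noteq> d" "b \<noteq> c" "b \<noteq> d" "c \<noteq> d"
  shows "P d \<in> inside (tri g a b c) \<or> P c \<in> inside (tri g a b d) \<or>
         P b \<in> inside (tri g a c d) \<or> P a \<in> inside (tri g b c d)"
proof -
  note S = Int_Un_distrib Int_Un_distrib2 dr_int doubleton_eq_iff V nd nd[THEN not_sym]
  have vacb: "arc (via g a c b)" "pathstart (via g a c b) = P a" "pathfinish (via g a c b) = P b"
    "path_image (via g a c b) = E g a c \<union> E g c b" using dr_via[of a b c] V nd by auto
  have vadb: "arc (via g a d b)" "pathstart (via g a d b) = P a" "pathfinish (via g a d b) = P b"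
    "path_image (via g a d b) = E g a d \<union> E g d b" using dr_via[of a b d] V nd by auto
  have vcad: "arc (via g c a d)" "pathstart (via g c a d) = P c" "pathfinish (via g c a d) = P d"
    "path_image (via g c a d) = E g c a \<union> E g a d" using dr_via[of c d a] V nd by auto
  have vcbd: "arc (via g c b d)" "pathstart (via g c b d) = P c" "pathfinish (via g c b d) = P d"
    "path_image (via g c b d) = E g c b \<union> E g b d" using dr_via[of c d b] V nd by auto
  have ab: "arc (g a b)" "pathstart (g a b) = P a" "pathfinish (g a b) = P b"
    using dr_arc dr_start dr_finish V nd by auto
  have cd: "arc (g c d)" "pathstart (g c d) = P c" "pathfinish (g c d) = P d"
    using dr_arc dr_start dr_finish V nd by auto
  have i12: "E g a b \<inter> path_image (via g a c b) = {P a, P b}"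
    unfolding vacb(4) by (simp add: S)
  have i13: "E g a b \<inter> path_image (via g a d b) = {P a, P b}"
    unfolding vadb(4) by (simp add: S)
  have i23: "path_image (via g a c b) \<inter> path_image (via g a d b) = {P a, P b}"
    unfolding vacb(4) vadb(4) by (simp add: S)
  have j12: "E g c d \<inter> path_image (via g c a d) = {P c, P d}"
    unfolding vcad(4) by (simp add: S)
  have j13: "E g c d \<inter> path_image (via g c b d) = {P c, P d}"
    unfolding vcbd(4) by (simp add: S)
  have j23: "path_image (via g c a d) \<inter> path_image (via g c b d) = {P c, P d}"
    unfolding vcad(4) vcbd(4) by (simp add: S)
  have tabc: "E g a b \<union> path_image (via g a c b) = tri g a b c" using tri_via V nd by blast
  have tabd: "E g a b \<union> path_image (via g a d b) = tri g a b d" using tri_via V nd by blast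
  have tcda: "E g c d \<union> path_image (via g c a d) = tri g a c d"
    using tri_via[of c d a] tri_perm[of a c d] V nd by auto
  have tcdb: "E g c d \<union> path_image (via g c b d) = tri g b c d"
    using tri_via[of c d b] tri_perm[of b c d] V nd by auto
  from theta_mid[OF ab(1) vacb(1) vadb(1) ab(2,3) vacb(2,3) vadb(2,3) i12 i13 i23]
  consider (m3) "(path_image (via g a d b) - {P a, P b}) \<inter> inside (tri g a b c) \<noteq> {}"
    | (m1) "(E g a b - {P a, P b}) \<inter> inside (path_image (via g a c b) \<union> path_image (via g a d b)) \<noteq> {}"
    | (m2) "(path_image (via g a c b) - {P a, P b}) \<inter> inside (tri g a b d) \<noteq> {}"
    unfolding tabc tabd by blast
  then show ?thesis
  proof cases
    case m3
    then show ?thesis using mid_inside[of a b c d] V nd by blast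
  next
    case m2
    then show ?thesis using mid_inside[of a b d c] V nd by blast
  next
    case m1
    from theta_mid[OF cd(1) vcad(1) vcbd(1) cd(2,3) vcad(2,3) vcbd(2,3) j12 j13 j23]
    consider (n3) "(path_image (via g c b d) - {P c, P d}) \<inter> inside (tri g a c d) \<noteq> {}"
      | (n1) "(E g c d - {P c, P d}) \<inter> inside (path_image (via g c a d) \<union> path_image (via g c b d)) \<noteq> {}"
      | (n2) "(path_image (via g c a d) - {P c, P d}) \<inter> inside (tri g b c d) \<noteq> {}"
      unfolding tcda tcdb by blast
    then show ?thesis
    proof cases
      case n3
      then have "P b \<in> inside (tri g c d a)" using mid_inside[of c d a b] tri_perm[of a c d] V nd by auto
      then show ?thesis using tri_perm[of a c d] V nd by auto
    next
      case n2
      then have "P a \<in> inside (tri g c d b)" using mid_inside[of c d b a] tri_perm[of b c d] V nd by auto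
      then show ?thesis using tri_perm[of b c d] V nd by auto
    next
      case n1
      then obtain z where z: "z \<in> E g c d - {P c, P d}"
        "z \<in> inside (path_image (via g c a d) \<union> path_image (via g c b d))" by blast
      have "E g c a = E g a c" "E g b d = E g d b" using dr_sym V nd by auto
      then have same: "path_image (via g c a d) \<union> path_image (via g c b d) =
          path_image (via g a c b) \<union> path_image (via g a d b)"
        unfolding vcad(4) vcbd(4) vacb(4) vadb(4) by blast
      have ne: "E g a b \<inter> inside (path_image (via g a c b) \<union> path_image (via g a d b)) \<noteq> {}"
        using m1 by blast
      have sp: "simple_path (via g a c b)" "simple_path (via g a d b)" "simple_path (g a b)"
        using vacb(1) vadb(1) ab(1) arc_imp_simple_path by auto
      have pab: "P a \<noteq> P b" using dr_inj V nd by auto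
      have tabc': "path_image (via g a c b) \<union> E g a b = tri g a b c" using tabc by (metis Un_commute)
      have tabd': "path_image (via g a d b) \<union> E g a b = tri g a b d" using tabd by (metis Un_commute)
      have i12': "path_image (via g a c b) \<inter> E g a b = {P a, P b}" using i12 by (metis Int_commute)
      have i13': "path_image (via g a d b) \<inter> E g a b = {P a, P b}" using i13 by (metis Int_commute)
      have "inside (path_image (via g a c b) \<union> E g a b) \<union> inside (path_image (via g a d b) \<union> E g a b) \<union>
           (E g a b - {P a, P b}) = inside (path_image (via g a c b) \<union> path_image (via g a d b))"
        by (rule split_inside_simple_closed_curve[OF sp(1) vacb(2,3) sp(2) vadb(2,3) sp(3) ab(2,3) pab i23
          i12' i13' ne])
      then have spl: "inside (tri g a b c) \<union> inside (tri g a b d) \<union> (E g a b - {P a, P b}) =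
          inside (path_image (via g a c b) \<union> path_image (via g a d b))"
        unfolding tabc' tabd' .
      have "E g c d \<inter> E g a b = {}" by (simp add: S)
      then have "z \<notin> E g a b" using z(1) by blast
      moreover have "z \<in> inside (tri g a b c) \<union> inside (tri g a b d) \<union> (E g a b - {P a, P b})"
        using z(2) unfolding same spl .
      ultimately have "z \<in> inside (tri g a b c) \<or> z \<in> inside (tri g a b d)" by blast
      then show ?thesis
      proof
        assume zi: "z \<in> inside (tri g a b c)"
        have "E g c d \<inter> tri g a b c \<subseteq> {P c}" unfolding tri_def by (simp add: S)
        then have dis: "(E g c d - {P c}) \<inter> tri g a b c = {}" by blast
        have "P d \<in> E g c d" using dr_in[of c d] V nd by blast
        moreover have "P d \<noteq> P c" using dr_inj V nd by simp
        ultimately have pd: "P d \<in> E g c d - {P c}" by blast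
        have zc: "z \<in> E g c d - {P c}" using z(1) by blast
        have "P d \<in> inside (tri g a b c)"
          by (rule inside_reach[OF dr_open_conn(1)[of c d] dis zc pd zi]) (use V nd in auto)
        then show ?thesis by blast
      next
        assume zi: "z \<in> inside (tri g a b d)"
        have "E g c d \<inter> tri g a b d \<subseteq> {P d}" unfolding tri_def by (simp add: S)
        then have dis: "(E g c d - {P d}) \<inter> tri g a b d = {}" by blast
        have "P c \<in> E g c d" using dr_in[of c d] V nd by blast
        moreover have "P c \<noteq> P d" using dr_inj V nd by simp
        ultimately have pc: "P c \<in> E g c d - {P d}" by blast
        have zc: "z \<in> E g c d - {P d}" using z(1) by blast
        have "P c \<in> inside (tri g a b d)"
          by (rule inside_reach[OF dr_open_conn(2)[of c d] dis zc pc zi]) (use V nd in auto)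
        then show ?thesis by blast
      qed
    qed
  qed
qed


lemma K5_final:
  assumes V: "a \<in> V" "b \<in> V" "c \<in> V" "v \<in> V" "w \<in> V"
    and nd: "a \<noteq> b" "a \<noteq> c" "a \<noteq> v" "a \<noteq> w" "b \<noteq> c" "b \<noteq> v" "b \<noteq> w"
      "c \<noteq> v" "c \<noteq> w" "v \<noteq> w"
    and vin: "P v \<in> inside (tri g a b c)"
  shows False
proof -
  note S = Int_Un_distrib Int_Un_distrib2 dr_int doubleton_eq_iff V nd nd[THEN not_sym]
  have win: "P w \<in> inside (tri g a b c)"
    by (rule out_vertex[of a b c v w]) (use V nd vin in auto)
  have vacb: "arc (via g a c b)" "pathstart (via g a c b) = P a" "pathfinish (via g a c b) = P b"
    "path_image (via g a c b) = E g a c \<union> E g c b" using dr_via[of a b c] V nd by auto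
  have vavb: "arc (via g a v b)" "pathstart (via g a v b) = P a" "pathfinish (via g a v b) = P b"
    "path_image (via g a v b) = E g a v \<union> E g v b" using dr_via[of a b v] V nd by auto
  have vcav: "arc (via g c a v)" "pathstart (via g c a v) = P c" "pathfinish (via g c a v) = P v"
    "path_image (via g c a v) = E g c a \<union> E g a v" using dr_via[of c v a] V nd by auto
  have vcbv: "arc (via g c b v)" "pathstart (via g c b v) = P c" "pathfinish (via g c b v) = P v"
    "path_image (via g c b v) = E g c b \<union> E g b v" using dr_via[of c v b] V nd by auto
  have ab: "arc (g a b)" "pathstart (g a b) = P a" "pathfinish (g a b) = P b"
    using dr_arc dr_start dr_finish V nd by auto
  have cv: "arc (g c v)" "pathstart (g c v) = P c" "pathfinish (g c v) = P v"
    using dr_arc dr_start dr_finish V nd by auto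
  have i12: "E g a b \<inter> path_image (via g a c b) = {P a, P b}"
    unfolding vacb(4) by (simp add: S)
  have i13: "E g a b \<inter> path_image (via g a v b) = {P a, P b}"
    unfolding vavb(4) by (simp add: S)
  have i23: "path_image (via g a c b) \<inter> path_image (via g a v b) = {P a, P b}"
    unfolding vacb(4) vavb(4) by (simp add: S)
  have k12: "path_image (via g c a v) \<inter> path_image (via g c b v) = {P c, P v}"
    unfolding vcav(4) vcbv(4) by (simp add: S)
  have k13: "path_image (via g c a v) \<inter> E g c v = {P c, P v}"
    unfolding vcav(4) by (simp add: S)
  have k23: "path_image (via g c b v) \<inter> E g c v = {P c, P v}"
    unfolding vcbv(4) by (simp add: S)
  have tabc: "E g a b \<union> path_image (via g a c b) = tri g a b c" using tri_via V nd by blast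
  have tabv: "E g a b \<union> path_image (via g a v b) = tri g a b v" using tri_via V nd by blast
  have tacv: "path_image (via g c a v) \<union> E g c v = tri g a c v"
  proof -
    have "E g c v \<union> path_image (via g c a v) = tri g c v a" using tri_via[of c v a] V nd by blast
    moreover have "tri g c v a = tri g a c v" using tri_perm[of a c v] V nd by blast
    ultimately show ?thesis by (metis Un_commute)
  qed
  have tbcv: "path_image (via g c b v) \<union> E g c v = tri g b c v"
  proof -
    have "E g c v \<union> path_image (via g c b v) = tri g c v b" using tri_via[of c v b] V nd by blast
    moreover have "tri g c v b = tri g b c v" using tri_perm[of b c v] V nd by blast
    ultimately show ?thesis by (metis Un_commute)
  qed
  have sp: "simple_path (via g a c b)" "simple_path (via g a v b)" "simple_path (g a b)"
    "simple_path (via g c a v)" "simple_path (via g c b v)" "simple_path (g c v)"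
    using vacb(1) vavb(1) ab(1) vcav(1) vcbv(1) cv(1) arc_imp_simple_path by auto
  have pab: "P a \<noteq> P b" and pcv: "P c \<noteq> P v" using dr_inj V nd by auto
  have pv: "P v \<in> path_image (via g a v b)"
    unfolding vavb(4) using dr_in[of a v] V nd by blast
  have ne1: "path_image (via g a v b) \<inter> inside (E g a b \<union> path_image (via g a c b)) \<noteq> {}"
    using pv vin unfolding tabc by blast
  let ?Q = "path_image (via g a c b) \<union> path_image (via g a v b)"
  have "inside (E g a b \<union> path_image (via g a v b)) \<union> inside ?Q \<union> (path_image (via g a v b) - {P a, P b})
      = inside (E g a b \<union> path_image (via g a c b))"
    by (rule split_inside_simple_closed_curve[OF sp(3) ab(2,3) sp(1) vacb(2,3) sp(2) vavb(2,3) pab i12 i13 i23 ne1])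
  then have R1: "inside (tri g a b v) \<union> inside ?Q \<union> (path_image (via g a v b) - {P a, P b}) = inside (tri g a b c)"
    unfolding tabv tabc .
  have inabc: "P a \<in> tri g a b c" "P b \<in> tri g a b c" "P c \<in> tri g a b c"
    unfolding tri_def using dr_in V nd by blast+
  obtain z where z: "z \<in> E g c v - {P c, P v}" using dr_open_conn(4)[of c v] V nd by blast
  have "E g c v \<inter> tri g a b c \<subseteq> {P c}" unfolding tri_def by (simp add: S)
  then have dis1: "(E g c v - {P c}) \<inter> tri g a b c = {}" by blast
  have "P v \<in> E g c v" using dr_in[of c v] V nd by blast
  then have pvc: "P v \<in> E g c v - {P c}" using pcv by auto
  have zc: "z \<in> E g c v - {P c}" "z \<in> E g c v - {P v}" using z by auto
  have zin: "z \<in> inside (tri g a b c)"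
    by (rule inside_reach[OF dr_open_conn(1)[of c v] dis1 pvc zc(1) vin]) (use V nd in auto)
  have "E g c v \<inter> path_image (via g a v b) \<subseteq> {P v}" unfolding vavb(4) by (simp add: S)
  then have "z \<notin> path_image (via g a v b)" using z by blast
  then have "z \<in> inside (tri g a b v) \<or> z \<in> inside ?Q" using zin unfolding R1[symmetric] by blast
  moreover have "z \<notin> inside (tri g a b v)"
  proof
    assume zi: "z \<in> inside (tri g a b v)"
    have "E g c v \<inter> tri g a b v \<subseteq> {P v}" unfolding tri_def by (simp add: S)
    then have dis: "(E g c v - {P v}) \<inter> tri g a b v = {}" by blast
    have "P c \<in> E g c v" using dr_in[of c v] V nd by blast
    then have pc: "P c \<in> E g c v - {P v}" using pcv by blast
    have "P c \<in> inside (tri g a b v)"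
      by (rule inside_reach[OF dr_open_conn(2)[of c v] dis zc(2) pc zi]) (use V nd in auto)
    then have "P c \<in> inside (tri g a b c)" using R1 by blast
    then show False using inabc(3) inside_no_overlap by blast
  qed
  ultimately have zQ: "z \<in> inside ?Q" by blast
  have "E g c a = E g a c" "E g b v = E g v b" using dr_sym V nd by auto
  then have sameQ: "path_image (via g c a v) \<union> path_image (via g c b v) = ?Q"
    unfolding vcav(4) vcbv(4) vacb(4) vavb(4) by blast
  have ne2: "E g c v \<inter> inside (path_image (via g c a v) \<union> path_image (via g c b v)) \<noteq> {}"
    using z zQ unfolding sameQ by blast
  have "inside (path_image (via g c a v) \<union> E g c v) \<union> inside (path_image (via g c b v) \<union> E g c v) \<union>
      (E g c v - {P c, P v}) = inside (path_image (via g c a v) \<union> path_image (via g c b v))"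
    by (rule split_inside_simple_closed_curve[OF sp(4) vcav(2,3) sp(5) vcbv(2,3) sp(6) cv(2,3) pcv k12 k13 k23 ne2])
  then have R2: "inside (tri g a c v) \<union> inside (tri g b c v) \<union> (E g c v - {P c, P v}) = inside ?Q"
    unfolding tacv tbcv sameQ .
  have "P w \<notin> E g a v" "P w \<notin> E g v b" "P w \<notin> E g c v" using dr_notin V nd by auto
  then have "P w \<notin> path_image (via g a v b)" "P w \<notin> E g c v - {P c, P v}" unfolding vavb(4) by auto
  then have "P w \<in> inside (tri g a b v) \<or> P w \<in> inside (tri g a c v) \<or> P w \<in> inside (tri g b c v)"
    using win unfolding R1[symmetric] R2[symmetric] by blast
  then show False
  proof (elim disjE)
    assume "P w \<in> inside (tri g a b v)"
    then have "P c \<in> inside (tri g a b v)" by (rule out_vertex[rotated -1]) (use V nd in auto)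
    then have "P c \<in> inside (tri g a b c)" using R1 by blast
    then show False using inabc(3) inside_no_overlap by blast
  next
    assume "P w \<in> inside (tri g a c v)"
    then have "P b \<in> inside (tri g a c v)" by (rule out_vertex[rotated -1]) (use V nd in auto)
    then have "P b \<in> inside (tri g a b c)" using R1 R2 by blast
    then show False using inabc(2) inside_no_overlap by blast
  next
    assume "P w \<in> inside (tri g b c v)"
    then have "P a \<in> inside (tri g b c v)" by (rule out_vertex[rotated -1]) (use V nd in auto)
    then have "P a \<in> inside (tri g a b c)" using R1 R2 by blast
    then show False using inabc(1) inside_no_overlap by blast
  qed
qed

lemma no_K5:
  assumes V: "a \<in> V" "b \<in> V" "c \<in> V" "d \<in> V" "e \<in> V"
    and nd: "a \<noteq> b" "a \<noteq> c" "a \<noteq> d" "a \<noteq> e" "b \<noteq> c" "b \<noteq> d" "b \<noteq> e"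
      "c \<noteq> d" "c \<noteq> e" "d \<noteq> e"
  shows False
  using K4_inside[OF V(1-4) nd(1,2,3,5,6,8)]
proof (elim disjE)
  assume "P d \<in> inside (tri g a b c)"
  then show False by (rule K5_final[of a b c d e, rotated -1]) (use V nd in auto)
next
  assume "P c \<in> inside (tri g a b d)"
  then show False by (rule K5_final[of a b d c e, rotated -1]) (use V nd in auto)
next
  assume "P b \<in> inside (tri g a c d)"
  then show False by (rule K5_final[of a c d b e, rotated -1]) (use V nd in auto)
next
  assume "P a \<in> inside (tri g b c d)"
  then show False by (rule K5_final[of b c d a e, rotated -1]) (use V nd in auto)
qed

end

lemma I_sub_m:
  assumes fin: "finite (carrier R)" and loc: "local_ring_with_max R m"
    and I: "ideal I R" "I \<noteq> carrier R"
  shows "I \<subseteq> m"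
proof -
  interpret R: cring R using loc unfolding local_ring_with_max_def by blast
  let ?C = "{J. ideal J R \<and> I \<subseteq> J \<and> J \<noteq> carrier R}"
  have CI: "I \<in> ?C" using I by blast
  have sub: "J \<subseteq> carrier R" if "J \<in> ?C" for J using that ideal.axioms(1) additive_subgroup.a_subset by blast
  have finC: "finite ?C"
    by (rule finite_subset[of _ "Pow (carrier R)"]) (use sub fin in auto)
  let ?k = "Max (card ` ?C)"
  have "?k \<in> card ` ?C" using finC CI by (intro Max_in) auto
  then obtain J where J: "J \<in> ?C" "card J = ?k" by (metis (no_types, lifting) imageE)
  have maxJ: "card J' \<le> card J" if "J' \<in> ?C" for J' using J(2) finC that by simp
  have "maximalideal J R"
  proof (rule maximalidealI)
    show "ideal J R" using J by blast
    show "carrier R \<noteq> J" using J by blast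
    fix J' assume J': "ideal J' R" "J \<subseteq> J'" "J' \<subseteq> carrier R"
    show "J' = J \<or> J' = carrier R"
    proof (cases "J' = carrier R")
      case False
      then have "J' \<in> ?C" using J' J by blast
      then have "card J' \<le> card J" by (rule maxJ)
      moreover have "finite J'" using J'(3) fin finite_subset by blast
      ultimately have "J = J'" using J'(2) card_subset_eq by (metis antisym card_mono)
      then show ?thesis by blast
    qed blast
  qed
  then have "J = m" using loc unfolding local_ring_with_max_def by blast
  then show ?thesis using J by blast
qed

lemma alg_main:
  assumes fin: "finite (carrier R)" and loc: "local_ring_with_max R m"
    and I: "ideal I R" "I \<noteq> carrier R"
    and S: "minimal_gen_set (R Quot I) (quot_ideal R m I) S" and c5: "card S \<ge> 5"
  shows "\<exists>x. inj_on x {..<5::nat} \<and> (\<forall>i<5. x i \<in> gamma2_vertices R I) \<and>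
     (\<forall>i<5. \<forall>j<5. i \<noteq> j \<longrightarrow> gamma2_adj R I (x i) (x j))"
proof -
  interpret R: cring R using loc unfolding local_ring_with_max_def by blast
  interpret I: ideal I R by (rule I(1))
  interpret M: maximalideal m R using loc unfolding local_ring_with_max_def by blast
  let ?A = "R Quot I"
  let ?h = "\<lambda>x. I +>\<^bsub>R\<^esub> x"
  interpret A: cring ?A by (rule I.quotient_is_cring[OF R.is_cring])
  have hom: "?h \<in> ring_hom R ?A" by (rule I.rcos_ring_hom)
  have Im: "I \<subseteq> m" by (rule I_sub_m[OF fin loc I])
  have zA: "\<zero>\<^bsub>?A\<^esub> = I" by (simp add: FactRing_def)
  let ?K = "quot_ideal R m I"
  have SA: "S \<subseteq> carrier ?A" and SK: "Idl\<^bsub>?A\<^esub> S = ?K" and Smin: "\<And>T. T \<subset> S \<Longrightarrow> Idl\<^bsub>?A\<^esub> T \<noteq> ?K"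
    using S unfolding minimal_gen_set_def by auto
  have finS: "finite S" using c5 card.infinite by fastforce
  have L: "s \<notin> Idl\<^bsub>?A\<^esub> (S - {s})" if s: "s \<in> S" for s
  proof
    assume sin: "s \<in> Idl\<^bsub>?A\<^esub> (S - {s})"
    have sub: "S - {s} \<subseteq> carrier ?A" using SA by blast
    have idl: "ideal (Idl\<^bsub>?A\<^esub> (S - {s})) ?A" by (rule A.genideal_ideal[OF sub])
    have "S - {s} \<subseteq> Idl\<^bsub>?A\<^esub> (S - {s})" by (rule A.genideal_self[OF sub])
    then have "S \<subseteq> Idl\<^bsub>?A\<^esub> (S - {s})" using sin by blast
    then have "Idl\<^bsub>?A\<^esub> S \<subseteq> Idl\<^bsub>?A\<^esub> (S - {s})" by (rule A.genideal_minimal[OF idl])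
    moreover have "Idl\<^bsub>?A\<^esub> (S - {s}) \<subseteq> Idl\<^bsub>?A\<^esub> S" by (rule A.subset_Idl_subset[OF SA]) blast
    ultimately have "Idl\<^bsub>?A\<^esub> (S - {s}) = ?K" using SK by blast
    moreover have "S - {s} \<subset> S" using s by blast
    ultimately show False using Smin by blast
  qed
  have nz: "s \<noteq> \<zero>\<^bsub>?A\<^esub>" if s: "s \<in> S" for s
  proof
    assume "s = \<zero>\<^bsub>?A\<^esub>"
    moreover have "\<zero>\<^bsub>?A\<^esub> \<in> Idl\<^bsub>?A\<^esub> (S - {s})"
      using additive_subgroup.zero_closed[OF ideal.axioms(1)[OF A.genideal_ideal]] SA by blast
    ultimately show False using L[OF s] by simp
  qed
  have np: "s \<notin> PIdl\<^bsub>?A\<^esub> t" if st: "s \<in> S" "t \<in> S" "s \<noteq> t" for s t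
  proof
    assume "s \<in> PIdl\<^bsub>?A\<^esub> t"
    moreover have "PIdl\<^bsub>?A\<^esub> t = Idl\<^bsub>?A\<^esub> {t}" using A.cgenideal_eq_genideal SA st by blast
    moreover have "Idl\<^bsub>?A\<^esub> {t} \<subseteq> Idl\<^bsub>?A\<^esub> (S - {s})"
      by (rule A.subset_Idl_subset) (use SA st in auto)
    ultimately show False using L[OF st(1)] by blast
  qed
  obtain f where f: "bij_betw f {0..<card S} S" using ex_bij_betw_nat_finite[OF finS] by blast
  have finj: "inj_on f {..<5}"
    by (rule inj_on_subset[OF bij_betw_imp_inj_on[OF f]]) (use c5 in auto)
  have fS: "f i \<in> S" if "i < 5" for i using f that c5 unfolding bij_betw_def by auto
  have "S \<subseteq> ?K" using A.genideal_self[OF SA] SK by blast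
  then have "\<exists>y. y \<in> m \<and> f i = ?h y" if "i < 5" for i using fS[OF that] unfolding quot_ideal_def by blast
  then obtain x where x: "\<And>i. i < 5 \<Longrightarrow> x i \<in> m \<and> f i = ?h (x i)" by metis
  have xc: "x i \<in> carrier R" if "i < 5" for i using x[OF that] M.Icarr by blast
  have vert: "x i \<in> gamma2_vertices R I" if i: "i < 5" for i
  proof -
    have "x i \<notin> I"
    proof
      assume "x i \<in> I"
      then have "?h (x i) = I" by (rule I.a_rcos_const)
      then show False using nz[OF fS[OF i]] x[OF i] zA by simp
    qed
    moreover have "PIdl\<^bsub>R\<^esub> (x i) \<subseteq> m" by (rule R.cgenideal_minimal[OF M.is_ideal]) (use x i in blast)
    then have "PIdl\<^bsub>R\<^esub> (x i) <+>\<^bsub>R\<^esub> I \<subseteq> m" using Im M.a_closed unfolding set_add_def' by blast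
    then have "PIdl\<^bsub>R\<^esub> (x i) <+>\<^bsub>R\<^esub> I \<noteq> carrier R" using M.I_notcarr M.a_subset by blast
    ultimately show ?thesis unfolding gamma2_vertices_def using xc[OF i] by blast
  qed
  have notin: "x i \<notin> PIdl\<^bsub>R\<^esub> (x j) <+>\<^bsub>R\<^esub> I" if ij: "i < 5" "j < 5" "i \<noteq> j" for i j
  proof
    assume "x i \<in> PIdl\<^bsub>R\<^esub> (x j) <+>\<^bsub>R\<^esub> I"
    then obtain r k where rk: "r \<in> carrier R" "k \<in> I" "x i = r \<otimes>\<^bsub>R\<^esub> x j \<oplus>\<^bsub>R\<^esub> k"
      unfolding set_add_def' cgenideal_def by blast
    have kc: "k \<in> carrier R" using rk(2) I.Icarr by blast
    have "?h (x i) = ?h (r \<otimes>\<^bsub>R\<^esub> x j) \<oplus>\<^bsub>?A\<^esub> ?h k"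
      using ring_hom_add[OF hom] rk kc xc ij by simp
    also have "?h k = \<zero>\<^bsub>?A\<^esub>" using I.a_rcos_const[OF rk(2)] zA by simp
    also have "?h (r \<otimes>\<^bsub>R\<^esub> x j) = ?h r \<otimes>\<^bsub>?A\<^esub> ?h (x j)"
      using ring_hom_mult[OF hom] rk xc ij by simp
    also have "?h r \<otimes>\<^bsub>?A\<^esub> ?h (x j) \<oplus>\<^bsub>?A\<^esub> \<zero>\<^bsub>?A\<^esub> = ?h r \<otimes>\<^bsub>?A\<^esub> ?h (x j)"
      using ring_hom_closed[OF hom] rk xc ij by simp
    finally have "f i = ?h r \<otimes>\<^bsub>?A\<^esub> f j" using x ij by simp
    moreover have "?h r \<in> carrier ?A" using ring_hom_closed[OF hom] rk by simp
    ultimately have "f i \<in> PIdl\<^bsub>?A\<^esub> f j" unfolding cgenideal_def by blast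
    moreover have "f i \<noteq> f j" using finj ij by (simp add: inj_on_eq_iff)
    ultimately show False using np fS ij by blast
  qed
  have xinj: "inj_on x {..<5}"
  proof (rule inj_onI)
    fix i j assume "i \<in> {..<5::nat}" "j \<in> {..<5::nat}" "x i = x j"
    then have "f i = f j" using x by auto
    then show "i = j" using finj \<open>i \<in> _\<close> \<open>j \<in> _\<close> by (simp add: inj_on_eq_iff)
  qed
  have adj: "gamma2_adj R I (x i) (x j)" if ij: "i < 5" "j < 5" "i \<noteq> j" for i j
    unfolding gamma2_adj_def using vert ij notin xinj inj_on_eq_iff[OF xinj] by auto
  show ?thesis using xinj vert adj by blast
qed

lemma planar_drawing:
  assumes pl: "planar_graph V Adj" and xV: "\<And>i. i < 5 \<Longrightarrow> x i \<in> V" and xinj: "inj_on x {..<5::nat}"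
    and adj: "\<And>i j. i < 5 \<Longrightarrow> j < 5 \<Longrightarrow> i \<noteq> j \<Longrightarrow> Adj (x i) (x j)"
  shows "\<exists>P g. drawing {..<5::nat} P g"
proof -
  let ?N = "{..<5::nat}"
  obtain pos :: "_ \<Rightarrow> complex" and c where inj: "inj_on pos V"
    and ed: "\<forall>x\<in>V. \<forall>y\<in>V. Adj x y \<longrightarrow>
           arc (c x y) \<and> pathstart (c x y) = pos x \<and> pathfinish (c x y) = pos y \<and>
           path_image (c x y) \<inter> pos ` V = {pos x, pos y}"
    and cr: "\<forall>x\<in>V. \<forall>y\<in>V. \<forall>u\<in>V. \<forall>v\<in>V. Adj x y \<longrightarrow> Adj u v \<longrightarrow> {x, y} \<noteq> {u, v} \<longrightarrow>
           path_image (c x y) \<inter> path_image (c u v) \<subseteq> pos ` ({x, y} \<inter> {u, v})"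
    using pl unfolding planar_graph_def by (elim exE conjE) (rule that; assumption)
  define P where "P i = pos (x i)" for i
  define g where "g i j = (if i < j then c (x i) (x j) else reversepath (c (x j) (x i)))" for i j
  have e: "arc (c (x i) (x j)) \<and> pathstart (c (x i) (x j)) = P i \<and> pathfinish (c (x i) (x j)) = P j \<and>
      path_image (c (x i) (x j)) \<inter> pos ` V = {P i, P j}"
    if "i \<in> ?N" "j \<in> ?N" "i \<noteq> j" for i j
  proof -
    have i5: "i < 5" "j < 5" using that by auto
    show ?thesis using ed[rule_format, OF xV[OF i5(1)] xV[OF i5(2)] adj[OF i5 that(3)]]
      unfolding P_def .
  qed
  have cr': "path_image (c (x i) (x j)) \<inter> path_image (c (x k) (x l)) \<subseteq> P ` ({i,j} \<inter> {k,l})"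
    if "i \<in> ?N" "j \<in> ?N" "k \<in> ?N" "l \<in> ?N" "i \<noteq> j" "k \<noteq> l" "{i,j} \<noteq> {k,l}" for i j k l
  proof -
    have "x ` {i,j} \<noteq> x ` {k,l}"
      using inj_on_image_eq_iff[OF xinj, of "{i,j}" "{k,l}"] that by auto
    then have ne: "{x i, x j} \<noteq> {x k, x l}" by simp
    have "path_image (c (x i) (x j)) \<inter> path_image (c (x k) (x l)) \<subseteq> pos ` ({x i, x j} \<inter> {x k, x l})"
    proof -
      have i5: "i < 5" "j < 5" "k < 5" "l < 5" using that by auto
      show ?thesis
        by (rule cr[rule_format, OF xV[OF i5(1)] xV[OF i5(2)] xV[OF i5(3)] xV[OF i5(4)]
           adj[OF i5(1,2) that(5)] adj[OF i5(3,4) that(6)] ne])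
    qed
    also have "{x i, x j} \<inter> {x k, x l} = x ` ({i,j} \<inter> {k,l})"
      using inj_on_image_Int[OF xinj, of "{i,j}" "{k,l}"] that by auto
    finally show ?thesis unfolding P_def by (simp add: image_image)
  qed
  have gimg: "path_image (g i j) = path_image (c (x (min i j)) (x (max i j)))" if "i \<noteq> j" for i j
    using that unfolding g_def by (auto simp: path_image_reversepath min_def max_def)
  have PN: "P ` ?N \<subseteq> pos ` V" unfolding P_def using xV by auto
  have f1: "inj_on P ?N" unfolding P_def
      using comp_inj_on[OF xinj inj_on_subset[OF inj]] xV by (auto simp: comp_def)
  have f2: "\<forall>i\<in>?N. \<forall>j\<in>?N. i \<noteq> j \<longrightarrow> arc (g i j) \<and> pathstart (g i j) = P i \<and> pathfinish (g i j) = P j \<and>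
     path_image (g i j) \<inter> P ` ?N = {P i, P j} \<and> path_image (g i j) = path_image (g j i)"
  proof (intro ballI impI)
    fix i j assume ij: "i \<in> ?N" "j \<in> ?N" "i \<noteq> j"
    have base: "arc (g i j) \<and> pathstart (g i j) = P i \<and> pathfinish (g i j) = P j \<and>
       path_image (g i j) \<inter> pos ` V = {P i, P j}"
    proof (cases "i < j")
      case True
      then show ?thesis unfolding g_def using e[OF ij] by simp
    next
      case False
      then have "g i j = reversepath (c (x j) (x i))" unfolding g_def by simp
      then show ?thesis using e[of j i] ij by (simp add: arc_reversepath path_image_reversepath insert_commute)
    qed
    have "P i \<in> P ` ?N" "P j \<in> P ` ?N" using ij by auto
    moreover have "P i \<in> path_image (g i j)" "P j \<in> path_image (g i j)"
      using base pathstart_in_path_image pathfinish_in_path_image by metis+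
    ultimately have "path_image (g i j) \<inter> P ` ?N = {P i, P j}" using base PN by blast
    moreover have "path_image (g i j) = path_image (g j i)" using gimg ij by (simp add: min.commute max.commute)
    ultimately show "arc (g i j) \<and> pathstart (g i j) = P i \<and> pathfinish (g i j) = P j \<and>
       path_image (g i j) \<inter> P ` ?N = {P i, P j} \<and> path_image (g i j) = path_image (g j i)"
      using base by blast
  qed
  have f3: "\<forall>i\<in>?N. \<forall>j\<in>?N. \<forall>k\<in>?N. \<forall>l\<in>?N. i \<noteq> j \<longrightarrow> k \<noteq> l \<longrightarrow> {i,j} \<noteq> {k,l} \<longrightarrow>
     path_image (g i j) \<inter> path_image (g k l) \<subseteq> P ` ({i,j} \<inter> {k,l})"
  proof (intro ballI impI)
    fix i j k l assume v: "i \<in> ?N" "j \<in> ?N" "k \<in> ?N" "l \<in> ?N" and d: "i \<noteq> j" "k \<noteq> l" "{i,j} \<noteq> {k,l}"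
    have m1: "{min i j, max i j} = {i,j}" "{min k l, max k l} = {k,l}" by (auto simp: min_def max_def)
    have "path_image (c (x (min i j)) (x (max i j))) \<inter> path_image (c (x (min k l)) (x (max k l)))
        \<subseteq> P ` ({min i j, max i j} \<inter> {min k l, max k l})"
      by (rule cr') (use v d m1 in \<open>auto simp: min_def max_def\<close>)
    then show "path_image (g i j) \<inter> path_image (g k l) \<subseteq> P ` ({i,j} \<inter> {k,l})"
      using gimg d m1 by simp
  qed
  have "drawing ?N P g" unfolding drawing_def by (rule conjI[OF f1 conjI[OF f2 f3]])
  then show ?thesis by blast
qed

theorem proposition3p11:
  fixes R :: "('a, 'b) ring_scheme" and m I :: "'a set"
  assumes "finite (carrier R)"
    and "local_ring_with_max R m"
    and "\<not> principalideal m R"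
    and "ideal I R" and "I \<noteq> carrier R"
    and "planar_graph (gamma2_vertices R I) (gamma2_adj R I)"
  shows "ara (R Quot I) (quot_ideal R m I) \<le> 4"
proof -
  note fin = assms(1) and loc = assms(2) and I = assms(4,5) and pl = assms(6)
  interpret R: cring R using loc unfolding local_ring_with_max_def by blast
  interpret Ii: ideal I R by (rule I(1))
  interpret M: maximalideal m R using loc unfolding local_ring_with_max_def by blast
  let ?A = "R Quot I"
  let ?K = "quot_ideal R m I"
  interpret A: cring ?A by (rule Ii.quotient_is_cring[OF R.is_cring])
  have le4: "card S \<le> 4" if S: "minimal_gen_set ?A ?K S" for S
  proof (rule ccontr)
    assume "\<not> card S \<le> 4"
    then have "card S \<ge> 5" by simp
    then obtain x where x: "inj_on x {..<5::nat}" "\<forall>i<5. x i \<in> gamma2_vertices R I"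
      "\<forall>i<5. \<forall>j<5. i \<noteq> j \<longrightarrow> gamma2_adj R I (x i) (x j)"
      using alg_main[OF fin loc I S] by blast
    obtain P g where dr: "drawing {..<5::nat} P g"
      using planar_drawing[OF pl, of x] x by blast
    show False by (rule no_K5[OF dr, of 0 1 2 3 4]) auto
  qed
  have carrA: "carrier ?A = (\<lambda>a. I +>\<^bsub>R\<^esub> a) ` carrier R"
    by (auto simp: FactRing_def A_RCOSETS_def')
  have finA: "finite (carrier ?A)" unfolding carrA using fin by simp
  have Kid: "ideal ?K ?A" unfolding quot_ideal_def
    using R.ring_ideal_imp_quot_ideal[OF I(1) M.is_ideal] by simp
  have KA: "?K \<subseteq> carrier ?A" using Kid ideal.axioms(1) additive_subgroup.a_subset by blast
  have IdlK: "Idl\<^bsub>?A\<^esub> ?K = ?K"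
    using A.genideal_minimal[OF Kid] A.genideal_self[OF KA] by blast
  let ?G = "{S. S \<subseteq> carrier ?A \<and> Idl\<^bsub>?A\<^esub> S = ?K}"
  have "\<exists>n. \<exists>S\<in>?G. card S = n" using KA IdlK by blast
  then obtain n where n: "\<exists>S\<in>?G. card S = n" and nmin: "\<And>k. k < n \<Longrightarrow> \<not> (\<exists>S\<in>?G. card S = k)"
    using exists_least_iff[of "\<lambda>n. \<exists>S\<in>?G. card S = n"] by blast
  then obtain S0 where S0: "S0 \<in> ?G" "card S0 = n" by blast
  have "minimal_gen_set ?A ?K S0"
    unfolding minimal_gen_set_def
  proof (intro conjI allI impI)
    show "S0 \<subseteq> carrier ?A" "Idl\<^bsub>?A\<^esub> S0 = ?K" using S0 by auto
    fix T assume T: "T \<subset> S0"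
    show "Idl\<^bsub>?A\<^esub> T \<noteq> ?K"
    proof
      assume "Idl\<^bsub>?A\<^esub> T = ?K"
      then have "T \<in> ?G" using T S0 by blast
      moreover have "card T < n" using T S0 finA
        by (metis (no_types, lifting) mem_Collect_eq psubset_card_mono rev_finite_subset)
      ultimately show False using nmin by blast
    qed
  qed
  then have ne: "{card S | S. minimal_gen_set ?A ?K S} \<noteq> {}" by blast
  have sub: "{card S | S. minimal_gen_set ?A ?K S} \<subseteq> {..4}" using le4 by auto
  then have "finite {card S | S. minimal_gen_set ?A ?K S}" using finite_subset by blast
  then have "Min {card S | S. minimal_gen_set ?A ?K S} \<in> {card S | S. minimal_gen_set ?A ?K S}"
    using ne by (rule Min_in)
  then show ?thesis unfolding ara_def using sub by blast
qed

end
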